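(* Let $G_{12}$ be the graph with vertex set $\{1,\dots,12\}$ in which two distinct vertices are adjacent if and only if they both belong to one of the sets $\{1,4,7\}$, $\{2,4,5,6\}$, $\{2,4,6,7\}$, $\{2,4,6,9\}$, $\{2,4,9,12\}$, $\{2,5,8\}$, $\{2,6,7,11\}$, $\{2,11,12\}$, $\{3,6,9\}$, $\{4,5,6,10\}$, $\{4,10,12\}$, $\{6,10,11\}$, $\{10,11,12\}$. Then $G_{12}$ is not $\cup$-semi-weakly CIS, i.e., neither $G_{12}$ nor its complement is semi-weakly CIS.
   Context: A strong clique of a graph is a clique meeting every maximal stable set. A graph is semi-weakly CIS if it admits a family of strong cliques such that every two adjacent vertices lie together in some member. A graph is $\cup$-semi-weakly CIS if it or its complement is semi-weakly CIS. *)

theory Defs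
  imports Main
begin

text \<open>Finite simple graphs are given by a vertex set V and an adjacency
relation E (assumed symmetric and irreflexive on V by the constructions used).\<close>

definition stable_set :: "'a set \<Rightarrow> ('a \<Rightarrow> 'a \<Rightarrow> bool) \<Rightarrow> 'a set \<Rightarrow> bool" where
  "stable_set V E S \<longleftrightarrow> S \<subseteq> V \<and> (\<forall>u\<in>S. \<forall>v\<in>S. u \<noteq> v \<longrightarrow> \<not> E u v)"

definition maximal_stable_set :: "'a set \<Rightarrow> ('a \<Rightarrow> 'a \<Rightarrow> bool) \<Rightarrow> 'a set \<Rightarrow> bool" where
  "maximal_stable_set V E S \<longleftrightarrow> stable_set V E S \<and>
     (\<forall>T. stable_set V E T \<and> S \<subseteq> T \<longrightarrow> T = S)"

definition clique :: "'a set \<Rightarrow> ('a \<Rightarrow> 'a \<Rightarrow> bool) \<Rightarrow> 'a set \<Rightarrow> bool" where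
  "clique V E C \<longleftrightarrow> C \<subseteq> V \<and> (\<forall>u\<in>C. \<forall>v\<in>C. u \<noteq> v \<longrightarrow> E u v)"

definition strong_clique :: "'a set \<Rightarrow> ('a \<Rightarrow> 'a \<Rightarrow> bool) \<Rightarrow> 'a set \<Rightarrow> bool" where
  "strong_clique V E C \<longleftrightarrow> clique V E C \<and>
     (\<forall>S. maximal_stable_set V E S \<longrightarrow> C \<inter> S \<noteq> {})"

definition semi_weakly_CIS :: "'a set \<Rightarrow> ('a \<Rightarrow> 'a \<Rightarrow> bool) \<Rightarrow> bool" where
  "semi_weakly_CIS V E \<longleftrightarrow> (\<exists>\<F>. (\<forall>C\<in>\<F>. strong_clique V E C) \<and>
     (\<forall>u\<in>V. \<forall>v\<in>V. u \<noteq> v \<and> E u v \<longrightarrow> (\<exists>C\<in>\<F>. u \<in> C \<and> v \<in> C)))"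

definition compl_adj :: "('a \<Rightarrow> 'a \<Rightarrow> bool) \<Rightarrow> 'a \<Rightarrow> 'a \<Rightarrow> bool" where
  "compl_adj E u v \<longleftrightarrow> u \<noteq> v \<and> \<not> E u v"

definition union_semi_weakly_CIS :: "'a set \<Rightarrow> ('a \<Rightarrow> 'a \<Rightarrow> bool) \<Rightarrow> bool" where
  "union_semi_weakly_CIS V E \<longleftrightarrow> semi_weakly_CIS V E \<or> semi_weakly_CIS V (compl_adj E)"

definition G12_V :: "nat set" where "G12_V = {1..12}"

definition G12_sets :: "nat set list" where
  "G12_sets = [{1,4,7}, {2,4,5,6}, {2,4,6,7}, {2,4,6,9}, {2,4,9,12}, {2,5,8},
     {2,6,7,11}, {2,11,12}, {3,6,9}, {4,5,6,10}, {4,10,12}, {6,10,11}, {10,11,12}]"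

definition G12_E :: "nat \<Rightarrow> nat \<Rightarrow> bool" where
  "G12_E u v \<longleftrightarrow> u \<noteq> v \<and> (\<exists>X\<in>set G12_sets. u \<in> X \<and> v \<in> X)"

end

theory Submission
  imports Defs
begin

lemma no_swc:
  assumes "u \<in> V" "v \<in> V" "u \<noteq> v" "E u v" "maximal_stable_set V E S"
    "\<forall>x\<in>S. x \<noteq> u \<and> x \<noteq> v \<and> \<not> (E x u \<and> E x v)"
  shows "\<not> semi_weakly_CIS V E"
proof (rule notI)
  assume "semi_weakly_CIS V E"
  then obtain F where F: "\<forall>C\<in>F. strong_clique V E C"
    "\<forall>u\<in>V. \<forall>v\<in>V. u \<noteq> v \<and> E u v \<longrightarrow> (\<exists>C\<in>F. u \<in> C \<and> v \<in> C)"
    unfolding semi_weakly_CIS_def by blast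
  then obtain C where C: "C \<in> F" "u \<in> C" "v \<in> C" using assms by blast
  then have sc: "strong_clique V E C" using F by blast
  then obtain x where x: "x \<in> C" "x \<in> S" using assms(5) unfolding strong_clique_def by blast
  have cl: "clique V E C" using sc unfolding strong_clique_def by blast
  have cc: "\<forall>a\<in>C. \<forall>b\<in>C. a \<noteq> b \<longrightarrow> E a b" using cl unfolding clique_def by blast
  have xu: "x \<noteq> u" "x \<noteq> v" using x(2) assms(6) by blast+
  have "E x u" "E x v" using cc x(1) C(2,3) xu by blast+
  then show False using assms(6) x by blast
qed

lemma V_eq: "G12_V = {1,2,3,4,5,6,7,8,9,10,11,12}"
  unfolding G12_V_def by (auto; presburger)

lemma Ec: "G12_E u v \<longleftrightarrow> u \<noteq> v \<and> ((u\<in>{1,4,7} \<and> v\<in>{1,4,7}) \<or> (u\<in>{2,4,5,6} \<and> v\<in>{2,4,5,6}) \<or>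
  (u\<in>{2,4,6,7} \<and> v\<in>{2,4,6,7}) \<or> (u\<in>{2,4,6,9} \<and> v\<in>{2,4,6,9}) \<or> (u\<in>{2,4,9,12} \<and> v\<in>{2,4,9,12}) \<or>
  (u\<in>{2,5,8} \<and> v\<in>{2,5,8}) \<or> (u\<in>{2,6,7,11} \<and> v\<in>{2,6,7,11}) \<or> (u\<in>{2,11,12} \<and> v\<in>{2,11,12}) \<or>
  (u\<in>{3,6,9} \<and> v\<in>{3,6,9}) \<or> (u\<in>{4,5,6,10} \<and> v\<in>{4,5,6,10}) \<or> (u\<in>{4,10,12} \<and> v\<in>{4,10,12}) \<or>
  (u\<in>{6,10,11} \<and> v\<in>{6,10,11}) \<or> (u\<in>{10,11,12} \<and> v\<in>{10,11,12}))"
  unfolding G12_E_def G12_sets_def by simp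
lemma msg:
  assumes "stable_set V E S" "\<forall>x\<in>V. x \<notin> S \<longrightarrow> (\<exists>y\<in>S. E x y)"
  shows "maximal_stable_set V E S"
  unfolding maximal_stable_set_def
proof (intro conjI allI impI)
  show "stable_set V E S" by fact
  fix T assume T: "stable_set V E T \<and> S \<subseteq> T"
  show "T = S"
  proof (rule ccontr)
    assume "T \<noteq> S"
    then obtain x where "x \<in> T" "x \<notin> S" using T by blast
    moreover have "x \<in> V" using T \<open>x \<in> T\<close> unfolding stable_set_def by blast
    ultimately obtain y where "y \<in> S" "E x y" using assms(2) by blast
    have st: "\<forall>u\<in>T. \<forall>v\<in>T. u \<noteq> v \<longrightarrow> \<not> E u v" using T unfolding stable_set_def by blast
    have "y \<in> T" using T \<open>y \<in> S\<close> by blast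
    moreover have "x \<noteq> y" using \<open>y \<in> S\<close> \<open>x \<notin> S\<close> by blast
    ultimately show False using st \<open>x \<in> T\<close> \<open>E x y\<close> by blast
  qed
qed

lemma ms1: "maximal_stable_set G12_V G12_E {5,7,9}"
  apply (rule msg)
   apply (unfold stable_set_def V_eq ball_simps bex_simps Ec; simp)
  apply (unfold V_eq ball_simps bex_simps Ec; simp)
  done

lemma ms2: "maximal_stable_set G12_V (compl_adj G12_E) {6,10,11}"
  apply (rule msg)
   apply (unfold stable_set_def V_eq ball_simps bex_simps Ec compl_adj_def; simp)
  apply (unfold V_eq ball_simps bex_simps Ec compl_adj_def; simp)
  done

theorem proposition35:
  shows "\<not> union_semi_weakly_CIS G12_V G12_E"
proof -
  have "\<not> semi_weakly_CIS G12_V G12_E"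
    by (rule no_swc[where u=10 and v=12, OF _ _ _ _ ms1])
       (simp_all add: V_eq Ec)
  moreover have "\<not> semi_weakly_CIS G12_V (compl_adj G12_E)"
    by (rule no_swc[where u=5 and v=7, OF _ _ _ _ ms2])
       (simp_all add: V_eq Ec compl_adj_def)
  ultimately show ?thesis unfolding union_semi_weakly_CIS_def by blast
qed

end
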